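(* Let $n\ge1$ and let $c\in\mathfrak{S}_{n+1}$ be a Coxeter element. For every $\boldsymbol\pi=(\pi^k)_{1\le k\le n}\in\mathcal{ST}(c)$ and every $1\le k\le n$, \[\ell(\pi^k)\leqslant\min\bigl(\#\{i\in\mathbf L_c\cup\{1\}:i\leqslant k\},\ \#\{j\in\mathbf R_c\cup\{n+1\}:j>k\}\bigr).\]
   Context: $\ell(\pi)$ is the number of nonzero parts of a partition $\pi$. Coxeter element of $\mathfrak{S}_{n+1}$: product of $s_1,\dots,s_n$ ($s_i=(i,i+1)$), each exactly once; it is a long cycle $(c_1=1<c_2<\dots<c_m=n+1>c_{m+1}>\dots>c_{n+1})$, with $\mathbf L_c=\{c_2,\dots,c_{m-1}\}$, $\mathbf R_c=\{c_{m+1},\dots,c_{n+1}\}$. Storability: a pair of partitions $(\lambda,\mu)$ (padded with zeros) is storable if $\lambda_i\ge\mu_i\ge\lambda_{i+1}$ for all $i\ge1$. A triple $(\lambda,\mu,\nu)$ is $(\boxplus,\boxplus)$-storable if $(\lambda,\mu)$ and $(\nu,\mu)$ are storable; $(\boxplus,\boxminus)$-storable if $(\lambda,\mu)$ and $(\mu,\nu)$ are; $(\boxminus,\boxplus)$-storable if $(\mu,\lambda)$ and $(\nu,\mu)$ are; $(\boxminus,\boxminus)$-storable if $(\mu,\lambda)$ and $(\mu,\nu)$ are. For $\boldsymbol\pi=(\pi^1,\dots,\pi^n)$ set $\pi^0=\pi^{n+1}=(0)$; $\boldsymbol\pi$ is $X$-storable at $i$ if $(\pi^{i-1},\pi^i,\pi^{i+1})$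 is $X$-storable. With $\mathbf L=\mathbf L_c\cup\{1\}$, $\mathbf R=\mathbf R_c\cup\{n+1\}$ and $\mathbf R[-1]=\{r-1:r\in\mathbf R\}$, $\boldsymbol\pi\in\mathcal{ST}(c)$ ($c$-storable) means that for each $i\in\{1,\dots,n\}$: $(\boxplus,\boxplus)$-storable at $i$ if $i\notin\mathbf L\cup\mathbf R[-1]$; $(\boxplus,\boxminus)$-storable at $i$ if $i\in\mathbf R[-1]\setminus\mathbf L$; $(\boxminus,\boxplus)$-storable at $i$ if $i\in\mathbf L\setminus\mathbf R[-1]$; $(\boxminus,\boxminus)$-storable at $i$ if $i\in\mathbf L\cap\mathbf R[-1]$; and $\pi^k=(0)$ for $k\notin\{\min\mathbf L,\dots,\max\mathbf R\}$. *)

theory Defs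
  imports Main
begin

text \<open>Partitions are represented as functions nat => nat, 0-indexed:
  p i is the (i+1)-st part; weakly decreasing and eventually zero (padded with zeros).\<close>

definition is_partition :: "(nat \<Rightarrow> nat) \<Rightarrow> bool" where
  "is_partition p \<longleftrightarrow> (\<forall>i. p (Suc i) \<le> p i) \<and> (\<exists>N. \<forall>i\<ge>N. p i = 0)"

definition zero_partition :: "nat \<Rightarrow> nat" where
  "zero_partition = (\<lambda>_. 0)"

definition plen :: "(nat \<Rightarrow> nat) \<Rightarrow> nat" where
  "plen p = card {i. p i \<noteq> 0}"

definition storable :: "(nat \<Rightarrow> nat) \<Rightarrow> (nat \<Rightarrow> nat) \<Rightarrow> bool" where
  "storable la mu \<longleftrightarrow> (\<forall>i. mu i \<le> la i \<and> la (Suc i) \<le> mu i)"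

definition st_pp :: "(nat \<Rightarrow> nat) \<Rightarrow> (nat \<Rightarrow> nat) \<Rightarrow> (nat \<Rightarrow> nat) \<Rightarrow> bool" where
  "st_pp la mu nu \<longleftrightarrow> storable la mu \<and> storable nu mu"
definition st_pm :: "(nat \<Rightarrow> nat) \<Rightarrow> (nat \<Rightarrow> nat) \<Rightarrow> (nat \<Rightarrow> nat) \<Rightarrow> bool" where
  "st_pm la mu nu \<longleftrightarrow> storable la mu \<and> storable mu nu"
definition st_mp :: "(nat \<Rightarrow> nat) \<Rightarrow> (nat \<Rightarrow> nat) \<Rightarrow> (nat \<Rightarrow> nat) \<Rightarrow> bool" where
  "st_mp la mu nu \<longleftrightarrow> storable mu la \<and> storable nu mu"
definition st_mm :: "(nat \<Rightarrow> nat) \<Rightarrow> (nat \<Rightarrow> nat) \<Rightarrow> (nat \<Rightarrow> nat) \<Rightarrow> bool" where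
  "st_mm la mu nu \<longleftrightarrow> storable mu la \<and> storable mu nu"

definition stransp :: "nat \<Rightarrow> nat \<Rightarrow> nat" where
  "stransp i x = (if x = i then Suc i else if x = Suc i then i else x)"

definition coxeter_element :: "nat \<Rightarrow> (nat \<Rightarrow> nat) \<Rightarrow> bool" where
  "coxeter_element n c \<longleftrightarrow>
     (\<exists>ws. distinct ws \<and> set ws = {1..n} \<and> c = foldr (\<lambda>i f. stransp i \<circ> f) ws id)"

text \<open>Writing c as the cycle (c_1 = 1, c_2, ..., c_(n+1)) with c(c_i) = c_(i+1),
  so c_(i+1) = c^i(1); m is the position of n+1.\<close>
definition cyc_pos_top :: "nat \<Rightarrow> (nat \<Rightarrow> nat) \<Rightarrow> nat" where
  "cyc_pos_top n c = (LEAST k. (c ^^ k) 1 = n + 1)"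

definition Lc :: "nat \<Rightarrow> (nat \<Rightarrow> nat) \<Rightarrow> nat set" where
  "Lc n c = {(c ^^ k) 1 | k. 0 < k \<and> k < cyc_pos_top n c}"

definition Rc :: "nat \<Rightarrow> (nat \<Rightarrow> nat) \<Rightarrow> nat set" where
  "Rc n c = {(c ^^ k) 1 | k. cyc_pos_top n c < k \<and> k \<le> n}"

definition ext_fam :: "nat \<Rightarrow> (nat \<Rightarrow> nat \<Rightarrow> nat) \<Rightarrow> nat \<Rightarrow> nat \<Rightarrow> nat" where
  "ext_fam n pi k = (if 1 \<le> k \<and> k \<le> n then pi k else zero_partition)"

definition c_storable :: "nat \<Rightarrow> (nat \<Rightarrow> nat) \<Rightarrow> (nat \<Rightarrow> nat \<Rightarrow> nat) \<Rightarrow> bool" where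
  "c_storable n c pi \<longleftrightarrow>
    (let L = Lc n c \<union> {1}; R = Rc n c \<union> {n + 1}; Rm = (\<lambda>r. r - 1) ` R;
         P = ext_fam n pi in
     (\<forall>i\<in>{1..n}.
        (i \<notin> L \<and> i \<notin> Rm \<longrightarrow> st_pp (P (i - 1)) (P i) (P (i + 1))) \<and>
        (i \<in> Rm \<and> i \<notin> L \<longrightarrow> st_pm (P (i - 1)) (P i) (P (i + 1))) \<and>
        (i \<in> L \<and> i \<notin> Rm \<longrightarrow> st_mp (P (i - 1)) (P i) (P (i + 1))) \<and>
        (i \<in> L \<and> i \<in> Rm \<longrightarrow> st_mm (P (i - 1)) (P i) (P (i + 1)))) \<and>
     (\<forall>k\<in>{1..n}. k \<notin> {Min L..Max R} \<longrightarrow> P k = zero_partition))"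

end

theory Submission
  imports Defs
begin

lemma supp_fin: "is_partition p \<Longrightarrow> finite {i. p i \<noteq> 0}"
proof -
  assume "is_partition p"
  then obtain N where "\<forall>i\<ge>N. p i = 0" unfolding is_partition_def by blast
  then have "{i. p i \<noteq> 0} \<subseteq> {..<N}" by (auto simp: not_less[symmetric])
  then show ?thesis using finite_subset by blast
qed

lemma st_le: "storable la mu \<Longrightarrow> finite {i. la i \<noteq> 0} \<Longrightarrow> plen mu \<le> plen la"
  unfolding plen_def storable_def
  by (intro card_mono) (auto, meson less_le_trans)

lemma st_le1: "storable la mu \<Longrightarrow> finite {i. mu i \<noteq> 0} \<Longrightarrow> plen la \<le> plen mu + 1"
proof -
  assume s: "storable la mu" and f: "finite {i. mu i \<noteq> 0}"
  have sub: "{i. la i \<noteq> 0} \<subseteq> insert 0 (Suc ` {i. mu i \<noteq> 0})"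
  proof
    fix i assume "i \<in> {i. la i \<noteq> 0}"
    then show "i \<in> insert 0 (Suc ` {i. mu i \<noteq> 0})"
      using s unfolding storable_def
    proof (cases i)
      case (Suc j)
      then have "la (Suc j) \<noteq> 0" using \<open>i \<in> {i. la i \<noteq> 0}\<close> by simp
      then have "mu j \<noteq> 0" using s unfolding storable_def by (metis le_zero_eq)
      then show ?thesis using Suc by blast
    qed simp
  qed
  have "card {i. la i \<noteq> 0} \<le> card (insert 0 (Suc ` {i. mu i \<noteq> 0}))"
    using sub f by (intro card_mono) auto
  also have "\<dots> \<le> card (Suc ` {i. mu i \<noteq> 0}) + 1"
    using f by (simp add: card_insert_if)
  also have "\<dots> \<le> card {i. mu i \<noteq> 0} + 1"
    using card_image_le f by auto
  finally show ?thesis unfolding plen_def .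
qed

theorem proposition4p10:
  fixes n :: nat and c :: "nat \<Rightarrow> nat" and pi :: "nat \<Rightarrow> nat \<Rightarrow> nat"
  assumes "n \<ge> 1"
    and "coxeter_element n c"
    and "\<forall>k\<in>{1..n}. is_partition (pi k)"
    and "c_storable n c pi"
    and "1 \<le> k" and "k \<le> n"
  shows "plen (pi k) \<le> min (card {i \<in> Lc n c \<union> {1}. i \<le> k})
                            (card {j \<in> Rc n c \<union> {n + 1}. j > k})"
proof -
  define L where "L = Lc n c \<union> {1}"
  define R where "R = Rc n c \<union> {n + 1}"
  define Rm where "Rm = (\<lambda>r. r - 1) ` R"
  define P where "P = ext_fam n pi"
  have cond: "\<forall>i\<in>{1..n}.
        (i \<notin> L \<and> i \<notin> Rm \<longrightarrow> st_pp (P (i - 1)) (P i) (P (i + 1))) \<and>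
        (i \<in> Rm \<and> i \<notin> L \<longrightarrow> st_pm (P (i - 1)) (P i) (P (i + 1))) \<and>
        (i \<in> L \<and> i \<notin> Rm \<longrightarrow> st_mp (P (i - 1)) (P i) (P (i + 1))) \<and>
        (i \<in> L \<and> i \<in> Rm \<longrightarrow> st_mm (P (i - 1)) (P i) (P (i + 1)))"
    using assms(4) unfolding c_storable_def Let_def L_def R_def Rm_def P_def by blast
  have fin: "finite {i. P j i \<noteq> 0}" for j
    using assms(3) supp_fin unfolding P_def ext_fam_def zero_partition_def by auto
  have Pk: "P k = pi k" using assms(5,6) unfolding P_def ext_fam_def by auto
  have Rm_iff: "i \<in> Rm \<longleftrightarrow> i + 1 \<in> R" if "i \<ge> 1" for i
    using that unfolding Rm_def by (auto simp: image_iff intro: bexI[where x="i+1"])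
  have left: "plen (P j) \<le> card {i \<in> L. 1 \<le> i \<and> i \<le> j}" if "j \<le> n" for j
    using that
  proof (induction j)
    case 0
    then show ?case unfolding P_def ext_fam_def plen_def zero_partition_def by simp
  next
    case (Suc j)
    have c: "(Suc j \<notin> L \<and> Suc j \<notin> Rm \<longrightarrow> st_pp (P j) (P (Suc j)) (P (Suc j + 1))) \<and>
        (Suc j \<in> Rm \<and> Suc j \<notin> L \<longrightarrow> st_pm (P j) (P (Suc j)) (P (Suc j + 1))) \<and>
        (Suc j \<in> L \<and> Suc j \<notin> Rm \<longrightarrow> st_mp (P j) (P (Suc j)) (P (Suc j + 1))) \<and>
        (Suc j \<in> L \<and> Suc j \<in> Rm \<longrightarrow> st_mm (P j) (P (Suc j)) (P (Suc j + 1)))"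
      using cond[rule_format, of "Suc j"] Suc.prems by simp
    have IH: "plen (P j) \<le> card {i \<in> L. 1 \<le> i \<and> i \<le> j}" using Suc by simp
    show ?case
    proof (cases "Suc j \<in> L")
      case True
      then have "storable (P (Suc j)) (P j)" using c unfolding st_mp_def st_mm_def by blast
      then have "plen (P (Suc j)) \<le> plen (P j) + 1" using st_le1 fin by blast
      moreover have "{i \<in> L. 1 \<le> i \<and> i \<le> Suc j} = insert (Suc j) {i \<in> L. 1 \<le> i \<and> i \<le> j}"
        using True by auto
      moreover have "finite {i \<in> L. 1 \<le> i \<and> i \<le> j}"
        by (rule finite_subset[of _ "{..j}"]) auto
      ultimately show ?thesis using IH by simp
    next
      case False
      then have "storable (P j) (P (Suc j))" using c unfolding st_pp_def st_pm_def by blast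
      then have "plen (P (Suc j)) \<le> plen (P j)" using st_le fin by blast
      moreover have "{i \<in> L. 1 \<le> i \<and> i \<le> Suc j} = {i \<in> L. 1 \<le> i \<and> i \<le> j}"
        using False by (auto simp: le_Suc_eq)
      ultimately show ?thesis using IH by simp
    qed
  qed
  have right: "plen (P (n + 1 - d)) \<le> card {r \<in> R. n + 1 - d < r \<and> r \<le> n + 1}" if "d \<le> n" for d
    using that
  proof (induction d)
    case 0
    then show ?case unfolding P_def ext_fam_def plen_def zero_partition_def by simp
  next
    case (Suc d)
    define i where "i = n - d"
    have i1: "1 \<le> i" "i \<le> n" using Suc.prems unfolding i_def by auto
    have ii: "n + 1 - Suc d = i" "n + 1 - d = i + 1" using Suc.prems unfolding i_def by auto
    have c: "(i \<notin> L \<and> i \<notin> Rm \<longrightarrow> st_pp (P (i - 1)) (P i) (P (i + 1))) \<and>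
        (i \<in> Rm \<and> i \<notin> L \<longrightarrow> st_pm (P (i - 1)) (P i) (P (i + 1))) \<and>
        (i \<in> L \<and> i \<notin> Rm \<longrightarrow> st_mp (P (i - 1)) (P i) (P (i + 1))) \<and>
        (i \<in> L \<and> i \<in> Rm \<longrightarrow> st_mm (P (i - 1)) (P i) (P (i + 1)))"
      using cond i1 by auto
    have IH: "plen (P (i + 1)) \<le> card {r \<in> R. i + 1 < r \<and> r \<le> n + 1}"
      using Suc ii by simp
    show ?case unfolding ii
    proof (cases "i + 1 \<in> R")
      case True
      then have "i \<in> Rm" using Rm_iff i1 by blast
      then have "storable (P i) (P (i + 1))" using c unfolding st_pm_def st_mm_def by blast
      then have "plen (P i) \<le> plen (P (i + 1)) + 1" using st_le1 fin by blast
      moreover have "{r \<in> R. i < r \<and> r \<le> n + 1} = insert (i + 1) {r \<in> R. i + 1 < r \<and> r \<le> n + 1}"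
        using True i1 by auto
      moreover have "finite {r \<in> R. i + 1 < r \<and> r \<le> n + 1}"
        by (rule finite_subset[of _ "{..n+1}"]) auto
      ultimately show "plen (P i) \<le> card {r \<in> R. i < r \<and> r \<le> n + 1}" using IH by simp
    next
      case False
      then have "i \<notin> Rm" using Rm_iff i1 by blast
      then have "storable (P (i + 1)) (P i)" using c unfolding st_pp_def st_mp_def by blast
      then have "plen (P i) \<le> plen (P (i + 1))" using st_le fin by blast
      moreover have "{r \<in> R. i < r \<and> r \<le> n + 1} = {r \<in> R. i + 1 < r \<and> r \<le> n + 1}"
        using False by (auto, metis Suc_lessI)
      ultimately show "plen (P i) \<le> card {r \<in> R. i < r \<and> r \<le> n + 1}" using IH by simp
    qed
  qed
  have l: "plen (pi k) \<le> card {i \<in> L. i \<le> k}"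
  proof -
    have "plen (pi k) \<le> card {i \<in> L. 1 \<le> i \<and> i \<le> k}" using left[of k] Pk assms(6) by simp
    also have "\<dots> \<le> card {i \<in> L. i \<le> k}"
      by (rule card_mono) (rule finite_subset[of _ "{..k}"], auto)
    finally show ?thesis .
  qed
  have finR: "finite R"
  proof -
    have "Rc n c \<subseteq> (\<lambda>k. (c ^^ k) 1) ` {..n}" unfolding Rc_def by auto
    then show ?thesis unfolding R_def using finite_subset by auto
  qed
  have r: "plen (pi k) \<le> card {j \<in> R. j > k}"
  proof -
    have "plen (pi k) \<le> card {r \<in> R. n + 1 - (n + 1 - k) < r \<and> r \<le> n + 1}"
      using right[of "n + 1 - k"] Pk assms(5,6) by simp
    also have "\<dots> \<le> card {j \<in> R. j > k}"
      using assms(6) finR by (intro card_mono) auto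
    finally show ?thesis .
  qed
  show ?thesis using l r unfolding L_def R_def by simp
qed

end
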